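(* Let $G$ be a graph that contains an induced subgraph $T$ isomorphic to the path $P_3$ on three vertices or to the triangle $C_3$, such that every vertex of $T$ has degree exactly $3$ in $G$. If $\chi_c^{\star}(G\setminus T)\leq 4$, then $\chi_c^{\star}(G)\leq 4$.
   Context: All graphs are finite and simple. $G\setminus T$ denotes the subgraph of $G$ induced by the vertices not in $T$. A correspondence-cover of a graph $G$ is a pair $(L,H)$ where $H$ is a graph and $L$ maps each $v\in V(G)$ to a subset $L(v)\subseteq V(H)$ such that: the sets $L(v)$ partition $V(H)$; each $L(v)$ induces a clique in $H$; if $uv\notin E(G)$ there are no edges of $H$ between $L(u)$ and $L(v)$; if $uv\in E(G)$ the edges of $H$ between $L(u)$ and $L(v)$ form a matching. The cover is $k$-fold if $|L(v)|=k$ for all $v$. An independent transversal of $(L,H)$ is an independent set of $H$ containing exactly one vertex of each $L(v)$. A $k$-fold cover has a packing if it has $k$ pairwise vertex-disjoint independent transversals. $\chi_c^{\star}(G)$ is the least $k\geq 1$ such that every $k$-fold correspondence-cover of $G$ has a packing. *)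

theory Defs
  imports Main
begin

definition graph :: "'a set \<Rightarrow> 'a set set \<Rightarrow> bool" where
  "graph V E \<longleftrightarrow> finite V \<and>
     (\<forall>e\<in>E. \<exists>u v. e = {u, v} \<and> u \<noteq> v \<and> u \<in> V \<and> v \<in> V)"

definition degree :: "'a set \<Rightarrow> 'a set set \<Rightarrow> 'a \<Rightarrow> nat" where
  "degree V E v = card {u \<in> V. {u, v} \<in> E}"

definition induced_edges :: "'a set set \<Rightarrow> 'a set \<Rightarrow> 'a set set" where
  "induced_edges E S = {e \<in> E. e \<subseteq> S}"

definition corr_cover :: "'a set \<Rightarrow> 'a set set \<Rightarrow> ('a \<Rightarrow> 'b set) \<Rightarrow> 'b set \<Rightarrow> 'b set set \<Rightarrow> bool" where
  "corr_cover V E L VH EH \<longleftrightarrow>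
     graph VH EH \<and>
     (\<forall>v\<in>V. L v \<subseteq> VH) \<and> (\<Union>v\<in>V. L v) = VH \<and>
     (\<forall>u\<in>V. \<forall>v\<in>V. u \<noteq> v \<longrightarrow> L u \<inter> L v = {}) \<and>
     (\<forall>v\<in>V. \<forall>x\<in>L v. \<forall>y\<in>L v. x \<noteq> y \<longrightarrow> {x, y} \<in> EH) \<and>
     (\<forall>u\<in>V. \<forall>v\<in>V. u \<noteq> v \<longrightarrow> {u, v} \<notin> E \<longrightarrow>
        (\<forall>x\<in>L u. \<forall>y\<in>L v. {x, y} \<notin> EH)) \<and>
     (\<forall>u\<in>V. \<forall>v\<in>V. {u, v} \<in> E \<longrightarrow>
        (\<forall>x\<in>L u. \<forall>y1\<in>L v. \<forall>y2\<in>L v. {x, y1} \<in> EH \<longrightarrow> {x, y2} \<in> EH \<longrightarrow> y1 = y2))"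

definition kfold_cover :: "nat \<Rightarrow> 'a set \<Rightarrow> 'a set set \<Rightarrow> ('a \<Rightarrow> 'b set) \<Rightarrow> 'b set \<Rightarrow> 'b set set \<Rightarrow> bool" where
  "kfold_cover k V E L VH EH \<longleftrightarrow> corr_cover V E L VH EH \<and> (\<forall>v\<in>V. card (L v) = k)"

definition indep_transversal :: "'a set \<Rightarrow> ('a \<Rightarrow> 'b set) \<Rightarrow> 'b set \<Rightarrow> 'b set set \<Rightarrow> 'b set \<Rightarrow> bool" where
  "indep_transversal V L VH EH I \<longleftrightarrow>
     I \<subseteq> VH \<and> (\<forall>x\<in>I. \<forall>y\<in>I. {x, y} \<notin> EH) \<and> (\<forall>v\<in>V. card (I \<inter> L v) = 1)"

definition has_packing :: "nat \<Rightarrow> 'a set \<Rightarrow> ('a \<Rightarrow> 'b set) \<Rightarrow> 'b set \<Rightarrow> 'b set set \<Rightarrow> bool" where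
  "has_packing k V L VH EH \<longleftrightarrow>
     (\<exists>I :: nat \<Rightarrow> 'b set. (\<forall>i<k. indep_transversal V L VH EH (I i)) \<and>
        (\<forall>i<k. \<forall>j<k. i \<noteq> j \<longrightarrow> I i \<inter> I j = {}))"

text \<open>Correspondence packing number. Covers are taken with H having vertices in nat;
  since V(H) is finite, every cover is isomorphic to one of this form.\<close>
definition chi_c_star :: "'a set \<Rightarrow> 'a set set \<Rightarrow> nat" where
  "chi_c_star V E = (LEAST k. 1 \<le> k \<and>
     (\<forall>(L :: 'a \<Rightarrow> nat set) VH EH. kfold_cover k V E L VH EH \<longrightarrow> has_packing k V L VH EH))"

end

theory Submission
  imports Defs
begin

lemma cc_graph: "corr_cover V E L VH EH \<Longrightarrow> graph VH EH" unfolding corr_cover_def by simp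
lemma cc_sub: "corr_cover V E L VH EH \<Longrightarrow> v \<in> V \<Longrightarrow> L v \<subseteq> VH" unfolding corr_cover_def by simp
lemma cc_un: "corr_cover V E L VH EH \<Longrightarrow> (\<Union>v\<in>V. L v) = VH" unfolding corr_cover_def by simp
lemma cc_disj: assumes "corr_cover V E L VH EH" "u \<in> V" "v \<in> V" "x \<in> L u" "x \<in> L v" shows "u = v"
proof -
  have "\<forall>u\<in>V. \<forall>v\<in>V. u \<noteq> v \<longrightarrow> L u \<inter> L v = {}" using assms(1) unfolding corr_cover_def by simp
  then show ?thesis using assms(2-) by auto
qed
lemma cc_clique: assumes "corr_cover V E L VH EH" "v \<in> V" "x \<in> L v" "y \<in> L v" "x \<noteq> y" shows "{x,y} \<in> EH"
proof -
  have "\<forall>v\<in>V. \<forall>x\<in>L v. \<forall>y\<in>L v. x \<noteq> y \<longrightarrow> {x, y} \<in> EH" using assms(1) unfolding corr_cover_def by simp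
  then show ?thesis using assms(2-) by auto
qed
lemma cc_nonadj: assumes "corr_cover V E L VH EH" "u \<in> V" "v \<in> V" "u \<noteq> v" "{u,v} \<notin> E" "x \<in> L u" "y \<in> L v" shows "{x,y} \<notin> EH"
proof -
  have "\<forall>u\<in>V. \<forall>v\<in>V. u \<noteq> v \<longrightarrow> {u, v} \<notin> E \<longrightarrow>
        (\<forall>x\<in>L u. \<forall>y\<in>L v. {x, y} \<notin> EH)" using assms(1) unfolding corr_cover_def by simp
  then show ?thesis using assms(2-) by auto
qed
lemma cc_match: assumes "corr_cover V E L VH EH" "u \<in> V" "v \<in> V" "{u,v} \<in> E" "x \<in> L u" "y1 \<in> L v" "y2 \<in> L v"
   "{x,y1} \<in> EH" "{x,y2} \<in> EH" shows "y1 = y2"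
proof -
  have "\<forall>u\<in>V. \<forall>v\<in>V. {u, v} \<in> E \<longrightarrow>
        (\<forall>x\<in>L u. \<forall>y1\<in>L v. \<forall>y2\<in>L v. {x, y1} \<in> EH \<longrightarrow> {x, y2} \<in> EH \<longrightarrow> y1 = y2)"
    using assms(1) unfolding corr_cover_def by simp
  then show ?thesis using assms(2-) by auto
qed
lemma graph_noloop: "graph V E \<Longrightarrow> {x,x} \<notin> E" unfolding graph_def by auto
lemma graph_sub: assumes "graph V E" "{x,y} \<in> E" shows "x \<in> V \<and> y \<in> V"
proof -
  obtain u v where "{x,y} = {u,v}" "u \<in> V" "v \<in> V" using assms unfolding graph_def by blast
  then show ?thesis by (auto simp: doubleton_eq_iff)
qed
lemma graph_fin: "graph V E \<Longrightarrow> finite V" unfolding graph_def by simp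


definition spack :: "nat \<Rightarrow> 'a set \<Rightarrow> 'a set set \<Rightarrow> ('a \<Rightarrow> 'b set) \<Rightarrow> 'b set set \<Rightarrow> ('a \<Rightarrow> nat \<Rightarrow> 'b) \<Rightarrow> bool" where
  "spack k V E L EH s \<longleftrightarrow> (\<forall>v\<in>V. bij_betw (s v) {..<k} (L v)) \<and>
     (\<forall>u\<in>V. \<forall>v\<in>V. {u,v}\<in>E \<longrightarrow> (\<forall>i<k. {s u i, s v i} \<notin> EH))"

lemma spack_imp_packing:
  assumes cov: "corr_cover V E L VH EH" and sp: "spack k V E L EH s"
  shows "has_packing k V L VH EH"
proof -
  define I where "I i = (\<lambda>v. s v i) ` V" for i
  have mem: "s v i \<in> L v" if "v \<in> V" "i < k" for v i
    using sp that unfolding spack_def bij_betw_def by auto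
  have disj: "u = v" if "u \<in> V" "v \<in> V" "x \<in> L u" "x \<in> L v" for u v x
    using cc_disj[OF cov] that by blast
  have noloop: "{x, x} \<notin> EH" for x
    using graph_noloop[OF cc_graph[OF cov]] by simp
  have inj: "inj_on (s v) {..<k}" if "v \<in> V" for v
    using sp that unfolding spack_def bij_betw_def by auto
  have "indep_transversal V L VH EH (I i)" if "i < k" for i
    unfolding indep_transversal_def
  proof (intro conjI ballI)
    show "I i \<subseteq> VH" using cc_sub[OF cov] mem \<open>i<k\<close> unfolding I_def by blast
  next
    fix x y assume "x \<in> I i" "y \<in> I i"
    then obtain u v where u: "u \<in> V" "x = s u i" and v: "v \<in> V" "y = s v i" unfolding I_def by auto
    show "{x, y} \<notin> EH"
    proof (cases "u = v")
      case True then show ?thesis using u v noloop by simp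
    next
      case False
      show ?thesis
      proof (cases "{u,v} \<in> E")
        case True then show ?thesis using sp u v \<open>i<k\<close> unfolding spack_def by auto
      next
        case F2: False
        then show ?thesis using cc_nonadj[OF cov u(1) v(1) False F2] mem u v \<open>i<k\<close> by simp
      qed
    qed
  next
    fix v assume v: "v \<in> V"
    have "I i \<inter> L v = {s v i}"
    proof
      show "{s v i} \<subseteq> I i \<inter> L v" using mem v \<open>i<k\<close> unfolding I_def by auto
      show "I i \<inter> L v \<subseteq> {s v i}"
      proof
        fix x assume "x \<in> I i \<inter> L v"
        then obtain u where "u \<in> V" "x = s u i" "x \<in> L v" unfolding I_def by auto
        then have "u = v" using disj[of u v x] mem[of u i] v \<open>i<k\<close> by auto
        then show "x \<in> {s v i}" using \<open>x = s u i\<close> by simp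
      qed
    qed
    then show "card (I i \<inter> L v) = 1" by simp
  qed
  moreover have "I i \<inter> I j = {}" if "i < k" "j < k" "i \<noteq> j" for i j
  proof (rule ccontr)
    assume "I i \<inter> I j \<noteq> {}"
    then obtain u v where u: "u \<in> V" and v: "v \<in> V" and e: "s u i = s v j" unfolding I_def by auto
    then have "u = v" using disj mem that by metis
    then show False using inj[OF u] e that by (auto dest: inj_onD)
  qed
  ultimately show ?thesis unfolding has_packing_def by blast
qed

lemma packing_imp_spack:
  assumes cov: "kfold_cover k V E L VH EH" and hp: "has_packing k V L VH EH"
  shows "\<exists>s. spack k V E L EH s"
proof -
  obtain I where it: "\<forall>i<k. indep_transversal V L VH EH (I i)"
    and dj: "\<forall>i<k. \<forall>j<k. i \<noteq> j \<longrightarrow> I i \<inter> I j = {}"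
    using hp unfolding has_packing_def by blast
  have cc: "corr_cover V E L VH EH" using cov unfolding kfold_cover_def by simp
  define s where "s v i = the_elem (I i \<inter> L v)" for v i
  have sing: "I i \<inter> L v = {s v i}" if "i<k" "v\<in>V" for i v
  proof -
    have "card (I i \<inter> L v) = 1" using it that unfolding indep_transversal_def by blast
    then obtain x where "I i \<inter> L v = {x}" by (auto simp: card_Suc_eq)
    then show ?thesis unfolding s_def by simp
  qed
  have fin: "finite (L v)" if "v \<in> V" for v
    using graph_fin[OF cc_graph[OF cc]] cc_sub[OF cc that] by (meson finite_subset)
  have cardL: "card (L v) = k" if "v \<in> V" for v using cov that unfolding kfold_cover_def by blast
  have bij: "bij_betw (s v) {..<k} (L v)" if v: "v \<in> V" for v
  proof -
    have inj: "inj_on (s v) {..<k}"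
    proof (rule inj_onI)
      fix i j assume "i \<in> {..<k}" "j \<in> {..<k}" "s v i = s v j"
      then show "i = j" using sing[of i v] sing[of j v] dj v by fastforce
    qed
    have sub: "s v ` {..<k} \<subseteq> L v" using sing v by auto
    have "card (s v ` {..<k}) = k" using inj by (simp add: card_image)
    then have "s v ` {..<k} = L v" using sub fin[OF v] cardL[OF v] by (metis card_subset_eq)
    then show ?thesis using inj unfolding bij_betw_def by simp
  qed
  have "\<forall>u\<in>V. \<forall>v\<in>V. {u,v}\<in>E \<longrightarrow> (\<forall>i<k. {s u i, s v i} \<notin> EH)"
  proof (intro ballI impI allI)
    fix u v i assume "u \<in> V" "v \<in> V" "{u,v}\<in>E" "i<k"
    then have "s u i \<in> I i" "s v i \<in> I i" using sing by blast+
    then show "{s u i, s v i} \<notin> EH" using it \<open>i<k\<close> unfolding indep_transversal_def by blast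
  qed
  then show ?thesis using bij unfolding spack_def by blast
qed


lemma cover_restrict:
  assumes cov: "corr_cover V E L VH EH" and VV: "V' \<subseteq> V" and LL: "\<forall>v\<in>V'. L' v \<subseteq> L v"
    and EE: "E' \<subseteq> E" and EE2: "\<forall>u\<in>V'. \<forall>v\<in>V'. {u,v}\<in>E \<longrightarrow> {u,v}\<in>E'"
  shows "corr_cover V' E' L' (\<Union>v\<in>V'. L' v) {e\<in>EH. e \<subseteq> (\<Union>v\<in>V'. L' v)}"
proof -
  define W where "W = (\<Union>v\<in>V'. L' v)"
  have g: "graph VH EH" using cc_graph[OF cov] .
  have LW: "L' v \<subseteq> W" if "v \<in> V'" for v using that unfolding W_def by auto
  have LL': "x \<in> L v" if "v \<in> V'" "x \<in> L' v" for v x using LL that by auto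
  have subW: "W \<subseteq> VH"
  proof
    fix x assume "x \<in> W"
    then obtain v where "v \<in> V'" "x \<in> L' v" unfolding W_def by auto
    then show "x \<in> VH" using cc_sub[OF cov, of v] LL' VV by auto
  qed
  have f1: "graph W {e\<in>EH. e \<subseteq> W}"
    unfolding graph_def
  proof (intro conjI ballI)
    show "finite W" using graph_fin[OF g] subW by (rule finite_subset[rotated])
  next
    fix e assume e: "e \<in> {e\<in>EH. e \<subseteq> W}"
    then have "e \<in> EH" by simp
    then obtain u v where uv: "e = {u,v}" "u \<noteq> v" using g unfolding graph_def by meson
    have "u \<in> W" "v \<in> W" using e uv by auto
    then show "\<exists>u v. e = {u, v} \<and> u \<noteq> v \<and> u \<in> W \<and> v \<in> W" using uv
      by (intro exI[where x=u] exI[where x=v]) simp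
  qed
  have f2: "\<forall>u\<in>V'. \<forall>v\<in>V'. u \<noteq> v \<longrightarrow> L' u \<inter> L' v = {}"
  proof (intro ballI impI)
    fix u v assume uv: "u \<in> V'" "v \<in> V'" "u \<noteq> v"
    show "L' u \<inter> L' v = {}"
    proof (rule ccontr)
      assume "L' u \<inter> L' v \<noteq> {}"
      then obtain x where "x \<in> L' u" "x \<in> L' v" by auto
      then have "u = v" using cc_disj[OF cov, of u v x] LL' uv VV by auto
      then show False using uv by simp
    qed
  qed
  have f3: "\<forall>v\<in>V'. \<forall>x\<in>L' v. \<forall>y\<in>L' v. x \<noteq> y \<longrightarrow> {x, y} \<in> {e\<in>EH. e \<subseteq> W}"
  proof (intro ballI impI)
    fix v x y assume a: "v \<in> V'" "x \<in> L' v" "y \<in> L' v" "x \<noteq> y"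
    then have "{x,y} \<in> EH" using cc_clique[OF cov, of v x y] VV LL' by auto
    moreover have "{x,y} \<subseteq> W" using a LW by auto
    ultimately show "{x, y} \<in> {e\<in>EH. e \<subseteq> W}" by simp
  qed
  have f4: "\<forall>u\<in>V'. \<forall>v\<in>V'. u \<noteq> v \<longrightarrow> {u, v} \<notin> E' \<longrightarrow>
        (\<forall>x\<in>L' u. \<forall>y\<in>L' v. {x, y} \<notin> {e\<in>EH. e \<subseteq> W})"
  proof (intro ballI impI)
    fix u v x y assume a: "u \<in> V'" "v \<in> V'" "u \<noteq> v" "{u,v} \<notin> E'" "x \<in> L' u" "y \<in> L' v"
    have "{u,v} \<notin> E" using EE2 a by auto
    then have "{x,y} \<notin> EH" using cc_nonadj[OF cov, of u v x y] VV LL' a by auto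
    then show "{x, y} \<notin> {e\<in>EH. e \<subseteq> W}" by simp
  qed
  have f5: "\<forall>u\<in>V'. \<forall>v\<in>V'. {u, v} \<in> E' \<longrightarrow>
        (\<forall>x\<in>L' u. \<forall>y1\<in>L' v. \<forall>y2\<in>L' v. {x, y1} \<in> {e\<in>EH. e \<subseteq> W} \<longrightarrow> {x, y2} \<in> {e\<in>EH. e \<subseteq> W} \<longrightarrow> y1 = y2)"
  proof (intro ballI impI)
    fix u v x y1 y2 assume a: "u \<in> V'" "v \<in> V'" "{u,v} \<in> E'" "x \<in> L' u" "y1 \<in> L' v" "y2 \<in> L' v"
      "{x, y1} \<in> {e\<in>EH. e \<subseteq> W}" "{x, y2} \<in> {e\<in>EH. e \<subseteq> W}"
    have "{u,v} \<in> E" using EE a by auto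
    moreover have "{x,y1} \<in> EH" "{x,y2} \<in> EH" using a by auto
    ultimately show "y1 = y2" using cc_match[OF cov, of u v x y1 y2] VV LL' a by auto
  qed
  have f0: "\<forall>v\<in>V'. L' v \<subseteq> W" using LW by auto
  have f6: "(\<Union>v\<in>V'. L' v) = W" unfolding W_def ..
  show ?thesis unfolding corr_cover_def W_def[symmetric]
    using f0 f1 f2 f3 f4 f5 f6 by (intro conjI) (assumption | rule refl)+
qed


definition Pk :: "nat \<Rightarrow> 'a set \<Rightarrow> 'a set set \<Rightarrow> bool" where
  "Pk k V E \<longleftrightarrow> (\<forall>(L :: 'a \<Rightarrow> nat set) VH EH. kfold_cover k V E L VH EH \<longrightarrow> has_packing k V L VH EH)"

lemma chi_eq: "chi_c_star V E = (LEAST k. 1 \<le> k \<and> Pk k V E)"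
  unfolding chi_c_star_def Pk_def by simp

lemma spack_mem: "spack k V E L EH s \<Longrightarrow> v \<in> V \<Longrightarrow> i < k \<Longrightarrow> s v i \<in> L v"
  unfolding spack_def bij_betw_def by auto

lemma spack_lift:
  assumes "spack k V E L' {e\<in>EH. e \<subseteq> W} s" "\<forall>v\<in>V. L' v \<subseteq> W" "u \<in> V" "v \<in> V" "{u,v} \<in> E" "i < k"
  shows "{s u i, s v i} \<notin> EH"
proof -
  have "{s u i, s v i} \<notin> {e\<in>EH. e \<subseteq> W}" using assms unfolding spack_def by blast
  moreover have "s u i \<in> W" "s v i \<in> W" using spack_mem[OF assms(1)] assms by auto
  ultimately show ?thesis by simp
qed

lemma restrict_kfold:
  assumes cov: "kfold_cover (Suc k) V E L VH EH" and f: "\<forall>v\<in>V. f v \<in> L v"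
  shows "kfold_cover k V E (\<lambda>v. L v - {f v}) (\<Union>v\<in>V. L v - {f v}) {e\<in>EH. e \<subseteq> (\<Union>v\<in>V. L v - {f v})}"
proof -
  have cc: "corr_cover V E L VH EH" using cov unfolding kfold_cover_def by simp
  have "corr_cover V E (\<lambda>v. L v - {f v}) (\<Union>v\<in>V. L v - {f v}) {e\<in>EH. e \<subseteq> (\<Union>v\<in>V. L v - {f v})}"
    by (rule cover_restrict[OF cc]) auto
  moreover have "card (L v - {f v}) = k" if "v \<in> V" for v
    using cov f that unfolding kfold_cover_def by (simp add: card_Diff_singleton_if)
  ultimately show ?thesis unfolding kfold_cover_def by simp
qed

lemma Pk_mono:
  assumes P: "Pk k V E" and k: "1 \<le> k"
  shows "Pk (Suc k) V E"
  unfolding Pk_def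
proof (intro allI impI)
  fix L :: "'a \<Rightarrow> nat set" and VH EH
  assume cov: "kfold_cover (Suc k) V E L VH EH"
  have cc: "corr_cover V E L VH EH" using cov unfolding kfold_cover_def by simp
  define r where "r v = (SOME x. x \<in> L v)" for v
  have r: "\<forall>v\<in>V. r v \<in> L v"
  proof
    fix v assume "v \<in> V"
    then have "card (L v) = Suc k" using cov unfolding kfold_cover_def by simp
    then have "L v \<noteq> {}" by auto
    then show "r v \<in> L v" unfolding r_def by (simp add: some_in_eq)
  qed
  define W1 where "W1 = (\<Union>v\<in>V. L v - {r v})"
  have k1: "kfold_cover k V E (\<lambda>v. L v - {r v}) W1 {e\<in>EH. e \<subseteq> W1}"
    using restrict_kfold[OF cov r] unfolding W1_def .
  then obtain s1 where s1: "spack k V E (\<lambda>v. L v - {r v}) {e\<in>EH. e \<subseteq> W1} s1"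
    using P packing_imp_spack unfolding Pk_def by blast
  define t where "t v = s1 v 0" for v
  have t: "\<forall>v\<in>V. t v \<in> L v" using spack_mem[OF s1] k unfolding t_def by auto
  have tind: "{t u, t v} \<notin> EH" if "u \<in> V" "v \<in> V" "{u,v} \<in> E" for u v
    using spack_lift[OF s1 _ that, of 0] k unfolding t_def W1_def by auto
  define W2 where "W2 = (\<Union>v\<in>V. L v - {t v})"
  have k2: "kfold_cover k V E (\<lambda>v. L v - {t v}) W2 {e\<in>EH. e \<subseteq> W2}"
    using restrict_kfold[OF cov t] unfolding W2_def .
  then obtain s2 where s2: "spack k V E (\<lambda>v. L v - {t v}) {e\<in>EH. e \<subseteq> W2} s2"
    using P packing_imp_spack unfolding Pk_def by blast
  define s where "s v i = (if i = k then t v else s2 v i)" for v i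
  have bij: "bij_betw (s v) {..<Suc k} (L v)" if v: "v \<in> V" for v
  proof -
    have b2: "bij_betw (s2 v) {..<k} (L v - {t v})" using s2 v unfolding spack_def by simp
    have img: "s v ` {..<k} = s2 v ` {..<k}" unfolding s_def by auto
    have inj: "inj_on (s v) {..<Suc k}"
    proof (rule inj_onI)
      fix i j assume ij: "i \<in> {..<Suc k}" "j \<in> {..<Suc k}" "s v i = s v j"
      show "i = j"
      proof (cases "i = k")
        case True
        show ?thesis
        proof (rule ccontr)
          assume "i \<noteq> j"
          then have "j < k" using ij True by auto
          then have "s2 v j \<in> L v - {t v}" using spack_mem[OF s2 v] by auto
          then show False using ij True \<open>j<k\<close> unfolding s_def by auto
        qed
      next
        case False
        then have "i < k" using ij by auto
        then have si: "s2 v i \<in> L v - {t v}" using spack_mem[OF s2 v] by auto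
        show ?thesis
        proof (cases "j = k")
          case True then show ?thesis using ij si False unfolding s_def by auto
        next
          case F2: False
          then have "j < k" using ij by auto
          then have "s2 v i = s2 v j" using ij False F2 unfolding s_def by auto
          then show ?thesis using b2 \<open>i<k\<close> \<open>j<k\<close> unfolding bij_betw_def by (auto dest: inj_onD)
        qed
      qed
    qed
    have "s v ` {..<Suc k} = insert (s v k) (s v ` {..<k})" by (simp add: lessThan_Suc)
    also have "\<dots> = insert (t v) (L v - {t v})" using img b2 unfolding s_def bij_betw_def by simp
    also have "\<dots> = L v" using t v by auto
    finally show ?thesis using inj unfolding bij_betw_def by simp
  qed
  have "\<forall>u\<in>V. \<forall>v\<in>V. {u,v}\<in>E \<longrightarrow> (\<forall>i<Suc k. {s u i, s v i} \<notin> EH)"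
  proof (intro ballI impI allI)
    fix u v i assume a: "u \<in> V" "v \<in> V" "{u,v}\<in>E" "i < Suc k"
    show "{s u i, s v i} \<notin> EH"
    proof (cases "i = k")
      case True then show ?thesis using tind a unfolding s_def by simp
    next
      case False
      then have "i < k" using a by simp
      then show ?thesis using spack_lift[OF s2 _ a(1-3), of i] False unfolding s_def W2_def by auto
    qed
  qed
  then have "spack (Suc k) V E L EH s" using bij unfolding spack_def by blast
  then show "has_packing (Suc k) V L VH EH" using spack_imp_packing[OF cc] by blast
qed

lemma Pk_mono_le: "Pk k V E \<Longrightarrow> 1 \<le> k \<Longrightarrow> k \<le> m \<Longrightarrow> Pk m V E"
proof (induction m)
  case 0 then show ?case by simp
next
  case (Suc m)
  then show ?case
  proof (cases "k = Suc m")
    case True then show ?thesis using Suc by simp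
  next
    case False
    then have "k \<le> m" using Suc by simp
    then show ?thesis using Suc Pk_mono[of m V E] by simp
  qed
qed


lemma card_le_by_UN:
  assumes "finite N" "S \<subseteq> (\<Union>u\<in>N. A u)" "\<And>u. u \<in> N \<Longrightarrow> finite (A u)" "\<And>u. u \<in> N \<Longrightarrow> card (A u) \<le> 1"
  shows "card S \<le> card N"
proof -
  have fin: "finite (\<Union>u\<in>N. A u)" using assms by auto
  have "card S \<le> card (\<Union>u\<in>N. A u)" using card_mono[OF fin assms(2)] .
  also have "\<dots> \<le> (\<Sum>u\<in>N. card (A u))" using card_UN_le[OF assms(1)] .
  also have "\<dots> \<le> (\<Sum>u\<in>N. 1)" using assms(4) by (intro sum_mono) auto
  finally show ?thesis by simp
qed

lemma card_le1: "finite A \<Longrightarrow> \<forall>a\<in>A. \<forall>b\<in>A. a = b \<Longrightarrow> card A \<le> 1"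
  using card_le_Suc0_iff_eq by fastforce

lemma row_bound:
  assumes cov: "corr_cover V E L VH EH" and NV: "N \<subseteq> V" and fN: "finite N" and x: "x \<in> V"
    and adj: "\<forall>u\<in>N. {u,x} \<in> E" and g: "\<forall>u\<in>N. g u \<in> L u"
    and h: "\<forall>j\<in>J. h j \<in> L x" and inj: "inj_on h J" and fJ: "finite J"
  shows "card {j\<in>J. \<exists>u\<in>N. {g u, h j} \<in> EH} \<le> card N"
proof (rule card_le_by_UN[OF fN, where A="\<lambda>u. {j\<in>J. {g u, h j} \<in> EH}"])
  show "{j\<in>J. \<exists>u\<in>N. {g u, h j} \<in> EH} \<subseteq> (\<Union>u\<in>N. {j\<in>J. {g u, h j} \<in> EH})" by auto
  show "finite {j\<in>J. {g u, h j} \<in> EH}" for u using fJ by auto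
  fix u assume u: "u \<in> N"
  have "\<forall>a\<in>{j\<in>J. {g u, h j} \<in> EH}. \<forall>b\<in>{j\<in>J. {g u, h j} \<in> EH}. a = b"
  proof (intro ballI)
    fix a b assume a: "a \<in> {j\<in>J. {g u, h j} \<in> EH}" and b: "b \<in> {j\<in>J. {g u, h j} \<in> EH}"
    have "h a = h b"
      using cc_match[OF cov, of u x "g u" "h a" "h b"] u NV x adj g h a b by auto
    then show "a = b" using inj a b by (auto dest: inj_onD)
  qed
  then show "card {j\<in>J. {g u, h j} \<in> EH} \<le> 1" using fJ by (intro card_le1) auto
qed

lemma col_bound:
  assumes cov: "corr_cover V E L VH EH" and NV: "N \<subseteq> V" and fN: "finite N" and x: "x \<in> V"
    and adj: "\<forall>u\<in>N. {u,x} \<in> E" and g: "\<forall>u\<in>N. \<forall>i\<in>J. g u i \<in> L u"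
    and inj: "\<forall>u\<in>N. inj_on (g u) J" and y: "y \<in> L x" and fJ: "finite J"
  shows "card {i\<in>J. \<exists>u\<in>N. {g u i, y} \<in> EH} \<le> card N"
proof (rule card_le_by_UN[OF fN, where A="\<lambda>u. {i\<in>J. {g u i, y} \<in> EH}"])
  show "{i\<in>J. \<exists>u\<in>N. {g u i, y} \<in> EH} \<subseteq> (\<Union>u\<in>N. {i\<in>J. {g u i, y} \<in> EH})" by auto
  show "finite {i\<in>J. {g u i, y} \<in> EH}" for u using fJ by auto
  fix u assume u: "u \<in> N"
  have "\<forall>a\<in>{i\<in>J. {g u i, y} \<in> EH}. \<forall>b\<in>{i\<in>J. {g u i, y} \<in> EH}. a = b"
  proof (intro ballI)
    fix a b assume a: "a \<in> {i\<in>J. {g u i, y} \<in> EH}" and b: "b \<in> {i\<in>J. {g u i, y} \<in> EH}"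
    have e1: "{y, g u a} \<in> EH" "{y, g u b} \<in> EH" using a b by (auto simp: insert_commute)
    have "{x,u} \<in> E" using adj u by (simp add: insert_commute)
    then have "g u a = g u b"
      using cc_match[OF cov, of x u y "g u a" "g u b"] u NV x g y a b e1 by auto
    then show "a = b" using inj u a b by (auto dest: inj_onD)
  qed
  then show "card {i\<in>J. {g u i, y} \<in> EH} \<le> 1" using fJ by (intro card_le1) auto
qed


lemma swap_step:
  fixes F :: "nat \<Rightarrow> 'b \<Rightarrow> bool"
  assumes bij: "bij_betw \<sigma> {..<k} B"
    and rows: "\<forall>i<k. card {y\<in>B. F i y} \<le> d" and cols: "\<forall>y\<in>B. card {i\<in>{..<k}. F i y} \<le> d"
    and kd: "2*d < k" and fB: "finite B"
    and i: "i < k" "F i (\<sigma> i)"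
  shows "\<exists>\<sigma>'. bij_betw \<sigma>' {..<k} B \<and> {x\<in>{..<k}. F x (\<sigma>' x)} \<subset> {x\<in>{..<k}. F x (\<sigma> x)}"
proof -
  define S1 where "S1 = {j\<in>{..<k}. F i (\<sigma> j)}"
  define S2 where "S2 = {j\<in>{..<k}. F j (\<sigma> i)}"
  have inj: "inj_on \<sigma> {..<k}" and img: "\<sigma> ` {..<k} = B" using bij unfolding bij_betw_def by auto
  have "\<sigma> ` S1 \<subseteq> {y\<in>B. F i y}" unfolding S1_def using img by auto
  moreover have "card (\<sigma> ` S1) = card S1" using inj unfolding S1_def
    by (intro card_image) (auto intro: inj_on_subset)
  moreover have "finite {y\<in>B. F i y}" using fB by simp
  ultimately have "card S1 \<le> card {y\<in>B. F i y}" using card_mono by metis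
  then have c1: "card S1 \<le> d" using rows i by (meson le_trans)
  have "\<sigma> i \<in> B" using img i by auto
  then have c2: "card S2 \<le> d" using cols unfolding S2_def by auto
  have "card (S1 \<union> S2) \<le> card S1 + card S2" by (rule card_Un_le)
  then have "card (S1 \<union> S2) < card {..<k}" using c1 c2 kd by simp
  moreover have "finite (S1 \<union> S2)" unfolding S1_def S2_def by simp
  ultimately have "\<not> {..<k} \<subseteq> S1 \<union> S2" using card_mono[of "S1 \<union> S2" "{..<k}"] by linarith
  then obtain j where j: "j < k" "j \<notin> S1" "j \<notin> S2" by auto
  have nj1: "\<not> F i (\<sigma> j)" using j unfolding S1_def by auto
  have nj2: "\<not> F j (\<sigma> i)" using j unfolding S2_def by auto
  have ij: "i \<noteq> j" using nj1 i by auto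
  define \<tau> where "\<tau> x = (if x = i then j else if x = j then i else x)" for x
  define \<sigma>' where "\<sigma>' x = \<sigma> (\<tau> x)" for x
  have tt: "\<tau> (\<tau> x) = x" for x unfolding \<tau>_def by auto
  have tk: "\<tau> x < k" if "x < k" for x unfolding \<tau>_def using that i j by auto
  have timg: "\<tau> ` {..<k} = {..<k}"
  proof
    show "\<tau> ` {..<k} \<subseteq> {..<k}" using tk by auto
    show "{..<k} \<subseteq> \<tau> ` {..<k}"
    proof
      fix x assume "x \<in> {..<k}"
      then have "\<tau> x \<in> {..<k}" "x = \<tau> (\<tau> x)" using tk tt by auto
      then show "x \<in> \<tau> ` {..<k}" by blast
    qed
  qed
  have "inj_on \<sigma>' {..<k}"
  proof (rule inj_onI)
    fix a b assume ab: "a \<in> {..<k}" "b \<in> {..<k}" "\<sigma>' a = \<sigma>' b"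
    then have "\<tau> a = \<tau> b" using inj tk unfolding \<sigma>'_def by (auto dest: inj_onD)
    then show "a = b" using tt by metis
  qed
  moreover have "\<sigma>' ` {..<k} = B"
  proof -
    have "\<sigma>' ` {..<k} = \<sigma> ` (\<tau> ` {..<k})" unfolding \<sigma>'_def by (simp add: image_image)
    then show ?thesis using timg img by simp
  qed
  ultimately have b': "bij_betw \<sigma>' {..<k} B" unfolding bij_betw_def by simp
  have sub: "{x\<in>{..<k}. F x (\<sigma>' x)} \<subseteq> {x\<in>{..<k}. F x (\<sigma> x)} - {i}"
  proof
    fix x assume x: "x \<in> {x\<in>{..<k}. F x (\<sigma>' x)}"
    show "x \<in> {x\<in>{..<k}. F x (\<sigma> x)} - {i}"
    proof (cases "x = i")
      case True then show ?thesis using x nj1 unfolding \<sigma>'_def \<tau>_def by auto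
    next
      case False
      show ?thesis
      proof (cases "x = j")
        case True then show ?thesis using x nj2 ij unfolding \<sigma>'_def \<tau>_def by auto
      next
        case F2: False then show ?thesis using x False unfolding \<sigma>'_def \<tau>_def by auto
      qed
    qed
  qed
  then have "{x\<in>{..<k}. F x (\<sigma>' x)} \<subset> {x\<in>{..<k}. F x (\<sigma> x)}" using i by auto
  then show ?thesis using b' by blast
qed

lemma swap_lemma:
  fixes F :: "nat \<Rightarrow> 'b \<Rightarrow> bool"
  assumes fB: "finite B" and cB: "card B = k"
    and rows: "\<forall>i<k. card {y\<in>B. F i y} \<le> d" and cols: "\<forall>y\<in>B. card {i\<in>{..<k}. F i y} \<le> d"
    and kd: "2*d < k"
  shows "\<exists>\<sigma>. bij_betw \<sigma> {..<k} B \<and> (\<forall>i<k. \<not> F i (\<sigma> i))"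
proof -
  have main: "\<And>\<sigma>. bij_betw \<sigma> {..<k} B \<Longrightarrow> card {x\<in>{..<k}. F x (\<sigma> x)} = n \<Longrightarrow>
     \<exists>\<sigma>. bij_betw \<sigma> {..<k} B \<and> (\<forall>i<k. \<not> F i (\<sigma> i))" for n
  proof (induction n rule: less_induct)
    case (less n)
    show ?case
    proof (cases "\<forall>i<k. \<not> F i (\<sigma> i)")
      case True then show ?thesis using less.prems by blast
    next
      case False
      then obtain i where "i < k" "F i (\<sigma> i)" by auto
      then obtain \<sigma>' where s': "bij_betw \<sigma>' {..<k} B" "{x\<in>{..<k}. F x (\<sigma>' x)} \<subset> {x\<in>{..<k}. F x (\<sigma> x)}"
        using swap_step[OF less.prems(1) rows cols kd fB] by blast
      then have "card {x\<in>{..<k}. F x (\<sigma>' x)} < n" using less.prems(2) psubset_card_mono[of "{x\<in>{..<k}. F x (\<sigma> x)}"] by auto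
      then show ?thesis using less.IH s'(1) by blast
    qed
  qed
  obtain \<sigma>0 where "bij_betw \<sigma>0 {0..<card B} B" using ex_bij_betw_nat_finite[OF fB] by blast
  then have "bij_betw \<sigma>0 {..<k} B" using cB by (simp add: atLeast0LessThan)
  then show ?thesis using main by blast
qed


lemma Pk_exists:
  assumes g: "graph V E"
  shows "Pk (2 * card V + 1) V E"
  unfolding Pk_def
proof (intro allI impI)
  fix L :: "'a \<Rightarrow> nat set" and VH EH
  define k where "k = 2 * card V + 1"
  assume cov0: "kfold_cover (2 * card V + 1) V E L VH EH"
  then have cov: "kfold_cover k V E L VH EH" unfolding k_def .
  have cc: "corr_cover V E L VH EH" using cov unfolding kfold_cover_def by simp
  have fV: "finite V" using graph_fin[OF g] .
  have cardL: "card (L v) = k" if "v \<in> V" for v using cov that unfolding kfold_cover_def by simp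
  have finL: "finite (L v)" if "v \<in> V" for v
    using graph_fin[OF cc_graph[OF cc]] cc_sub[OF cc that] by (rule finite_subset[rotated])
  have "\<exists>s. spack k V E L EH s"
  proof (induction rule: finite_subset_induct'[OF fV subset_refl])
    case 1 then show ?case unfolding spack_def by simp
  next
    case (2 a W)
    then obtain s where s: "spack k W E L EH s" by blast
    have a: "a \<in> V" using 2 by simp
    have WV: "W \<subseteq> V" using 2 by simp
    define N where "N = {u\<in>W. {u,a} \<in> E}"
    have NV: "N \<subseteq> V" using WV unfolding N_def by auto
    have fN: "finite N" using NV fV finite_subset by blast
    have cN: "card N \<le> card V" using NV fV by (simp add: card_mono)
    have adj: "\<forall>u\<in>N. {u,a} \<in> E" unfolding N_def by simp
    define F where "F i y = (\<exists>u\<in>N. {s u i, y} \<in> EH)" for i y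
    have rows: "\<forall>i<k. card {y\<in>L a. F i y} \<le> card V"
    proof (intro allI impI)
      fix i assume i: "i < k"
      have "card {y\<in>L a. \<exists>u\<in>N. {s u i, (\<lambda>y. y) y} \<in> EH} \<le> card N"
        by (rule row_bound[OF cc NV fN a adj]) (use spack_mem[OF s] i finL[OF a] N_def in auto)
      then show "card {y\<in>L a. F i y} \<le> card V" using cN unfolding F_def by simp
    qed
    have cols: "\<forall>y\<in>L a. card {i\<in>{..<k}. F i y} \<le> card V"
    proof
      fix y assume y: "y \<in> L a"
      have "card {i\<in>{..<k}. \<exists>u\<in>N. {s u i, y} \<in> EH} \<le> card N"
        by (rule col_bound[OF cc NV fN a adj _ _ y]) (use spack_mem[OF s] s N_def in \<open>auto simp: spack_def bij_betw_def\<close>)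
      then show "card {i\<in>{..<k}. F i y} \<le> card V" using cN unfolding F_def by simp
    qed
    obtain \<sigma> where \<sigma>: "bij_betw \<sigma> {..<k} (L a)" "\<forall>i<k. \<not> F i (\<sigma> i)"
      using swap_lemma[OF finL[OF a] cardL[OF a] rows cols] unfolding k_def by auto
    define s' where "s' = s(a := \<sigma>)"
    have "\<forall>v\<in>insert a W. bij_betw (s' v) {..<k} (L v)"
      using s \<sigma> 2 unfolding spack_def s'_def by auto
    moreover have "\<forall>u\<in>insert a W. \<forall>v\<in>insert a W. {u,v}\<in>E \<longrightarrow> (\<forall>i<k. {s' u i, s' v i} \<notin> EH)"
    proof (intro ballI impI allI)
      fix u v i assume u: "u \<in> insert a W" and v: "v \<in> insert a W" and e: "{u,v} \<in> E" and i: "i < k"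
      show "{s' u i, s' v i} \<notin> EH"
      proof (cases "u = a")
        case True
        show ?thesis
        proof (cases "v = a")
          case True then show ?thesis using \<open>u = a\<close> e graph_noloop[OF g] by simp
        next
          case False
          then have "v \<in> N" using v e True unfolding N_def by (auto simp: insert_commute)
          then have "{s v i, \<sigma> i} \<notin> EH" using \<sigma>(2) i unfolding F_def by auto
          then show ?thesis using True False unfolding s'_def by (simp add: insert_commute)
        qed
      next
        case False
        show ?thesis
        proof (cases "v = a")
          case True
          then have "u \<in> N" using u e False unfolding N_def by auto
          then have "{s u i, \<sigma> i} \<notin> EH" using \<sigma>(2) i unfolding F_def by auto
          then show ?thesis using True False unfolding s'_def by simp
        next
          case F2: False
          then show ?thesis using s u v e i False unfolding spack_def s'_def by auto
        qed
      qed
    qed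
    ultimately show ?case unfolding spack_def by blast
  qed
  then show "has_packing (2 * card V + 1) V L VH EH" using spack_imp_packing[OF cc] unfolding k_def by blast
qed

lemma Pk_ex: "graph V E \<Longrightarrow> \<exists>k. 1 \<le> k \<and> Pk k V E"
  using Pk_exists by fastforce


definition PL :: "nat list list" where "PL = [[0,1,2,3],[0,1,3,2],[0,2,1,3],[0,2,3,1],[0,3,1,2],[0,3,2,1],[1,0,2,3],[1,0,3,2],[1,2,0,3],[1,2,3,0],[1,3,0,2],[1,3,2,0],[2,0,1,3],[2,0,3,1],[2,1,0,3],[2,1,3,0],[2,3,0,1],[2,3,1,0],[3,0,1,2],[3,0,2,1],[3,1,0,2],[3,1,2,0],[3,2,0,1],[3,2,1,0]]"
definition DL :: "nat list list" where "DL = [[1,0,3,2],[1,2,3,0],[1,3,0,2],[2,0,3,1],[2,3,0,1],[2,3,1,0],[3,0,1,2],[3,2,0,1],[3,2,1,0]]"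
definition der :: "nat list \<Rightarrow> nat list \<Rightarrow> bool" where "der p q \<longleftrightarrow> (\<forall>i<4. p!i \<noteq> q!i)"
definition avoid :: "(nat \<Rightarrow> nat \<Rightarrow> bool) \<Rightarrow> nat list \<Rightarrow> bool" where "avoid A p \<longleftrightarrow> (\<forall>i<4. \<not> A i (p!i))"
definition deg2 :: "(nat \<Rightarrow> nat \<Rightarrow> bool) \<Rightarrow> bool" where
 "deg2 A \<longleftrightarrow> (\<forall>i<4. \<forall>j1<4. \<forall>j2<4. \<forall>j3<4. j1<j2 \<longrightarrow> j2<j3 \<longrightarrow> \<not>(A i j1 \<and> A i j2 \<and> A i j3) \<and> \<not>(A j1 i \<and> A j2 i \<and> A j3 i))"
definition deg1 :: "(nat \<Rightarrow> nat \<Rightarrow> bool) \<Rightarrow> bool" where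
 "deg1 A \<longleftrightarrow> (\<forall>i<4. \<forall>j1<4. \<forall>j2<4. j1<j2 \<longrightarrow> \<not>(A i j1 \<and> A i j2) \<and> \<not>(A j1 i \<and> A j2 i))"

lemma all4: "(\<forall>i<(4::nat). P i) \<longleftrightarrow> P 0 \<and> P 1 \<and> P 2 \<and> P 3"
  by (auto simp: less_Suc_eq numeral_eq_Suc)

lemma ext_core: assumes "deg1 M" shows "\<exists>r\<in>set PL. \<forall>i<4. \<forall>j<4. M (r!j) i \<longrightarrow> i = j"
proof -
  have h: "\<not>(M 0 0 \<and> M 0 1) \<and> \<not>(M 0 0 \<and> M 1 0) \<and> \<not>(M 0 0 \<and> M 0 2) \<and> \<not>(M 0 0 \<and> M 2 0) \<and> \<not>(M 0 0 \<and> M 0 3) \<and> \<not>(M 0 0 \<and> M 3 0) \<and> \<not>(M 0 1 \<and> M 0 2) \<and> \<not>(M 1 0 \<and> M 2 0) \<and> \<not>(M 0 1 \<and> M 0 3) \<and> \<not>(M 1 0 \<and> M 3 0) \<and> \<not>(M 0 2 \<and> M 0 3) \<and> \<not>(M 2 0 \<and> M 3 0) \<and> \<not>(M 1 0 \<and> M 1 1) \<and> \<not>(M 0 1 \<and> M 1 1) \<and> \<not>(M 1 0 \<and> M 1 2) \<and> \<not>(M 0 1 \<and> M 2 1) \<and> \<not>(M 1 0 \<and> M 1 3) \<and> \<not>(M 0 1 \<and> M 3 1) \<and> \<not>(M 1 1 \<and> M 1 2) \<and> \<not>(M 1 1 \<and> M 2 1) \<and> \<not>(M 1 1 \<and> M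 1 3) \<and> \<not>(M 1 1 \<and> M 3 1) \<and> \<not>(M 1 2 \<and> M 1 3) \<and> \<not>(M 2 1 \<and> M 3 1) \<and> \<not>(M 2 0 \<and> M 2 1) \<and> \<not>(M 0 2 \<and> M 1 2) \<and> \<not>(M 2 0 \<and> M 2 2) \<and> \<not>(M 0 2 \<and> M 2 2) \<and> \<not>(M 2 0 \<and> M 2 3) \<and> \<not>(M 0 2 \<and> M 3 2) \<and> \<not>(M 2 1 \<and> M 2 2) \<and> \<not>(M 1 2 \<and> M 2 2) \<and> \<not>(M 2 1 \<and> M 2 3) \<and> \<not>(M 1 2 \<and> M 3 2) \<and> \<not>(M 2 2 \<and> M 2 3) \<and> \<not>(M 2 2 \<and> M 3 2) \<and> \<not>(M 3 0 \<and> M 3 1) \<and> \<not>(M 0 3 \<and> M 1 3) \<and> \<not>(M 3 0 \<and> M 3 2) \<and> \<not>(M 0 3 \<and> M 2 3) \<and> \<not>(M 3 0 \<and> M 3 3) \<and> \<not>(M 0 3 \<and> M 3 3) \<and> \<not>(M 3 1 \<and> M 3 2) \<and> \<not>(M 1 3 \<and> M 2 3) \<and> \<not>(M 3 1 \<and> M 3 3) \<and> \<not>(M 1 3 \<and> M 3 3) \<and> \<not>(M 3 2 \<and> M 3 3) \<and> \<not>(M 2 3 \<and> M 3 3)" using assms unfolding deg1_def all4 by simp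
  show ?thesis unfolding PL_def all4 apply simp using h unfolding One_nat_def by satx
qed

lemma path_core: assumes "deg2 A" "deg2 C"
  shows "\<exists>pb\<in>set DL. (\<exists>pa\<in>set PL. der pa pb \<and> avoid A pa) \<and> (\<exists>pc\<in>set PL. der pc pb \<and> avoid C pc)"
proof -
  have h: "\<not>(A 0 0 \<and> A 0 1 \<and> A 0 2) \<and> \<not>(A 0 0 \<and> A 1 0 \<and> A 2 0) \<and> \<not>(A 0 0 \<and> A 0 1 \<and> A 0 3) \<and> \<not>(A 0 0 \<and> A 1 0 \<and> A 3 0) \<and> \<not>(A 0 0 \<and> A 0 2 \<and> A 0 3) \<and> \<not>(A 0 0 \<and> A 2 0 \<and> A 3 0) \<and> \<not>(A 0 1 \<and> A 0 2 \<and> A 0 3) \<and> \<not>(A 1 0 \<and> A 2 0 \<and> A 3 0) \<and> \<not>(A 1 0 \<and> A 1 1 \<and> A 1 2) \<and> \<not>(A 0 1 \<and> A 1 1 \<and> A 2 1) \<and> \<not>(A 1 0 \<and> A 1 1 \<and> A 1 3) \<and> \<not>(A 0 1 \<and> A 1 1 \<and> A 3 1) \<and> \<not>(A 1 0 \<and> A 1 2 \<and> A 1 3) \<and> \<not>(A 0 1 \<and> A 2 1 \<and> A 3 1) \<and> \<not>(A 1 1 \<and> A 1 2 \<and> A 1 3) \<and> \<not>(A 1 1 \<and> A 2 1 \<and> A 3 1) \<and> \<not>(A 2 0 \<and> A 2 1 \<and> A 2 2) \<and> \<not>(A 0 2 \<and> A 1 2 \<and> A 2 2) \<and> \<not>(A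 2 0 \<and> A 2 1 \<and> A 2 3) \<and> \<not>(A 0 2 \<and> A 1 2 \<and> A 3 2) \<and> \<not>(A 2 0 \<and> A 2 2 \<and> A 2 3) \<and> \<not>(A 0 2 \<and> A 2 2 \<and> A 3 2) \<and> \<not>(A 2 1 \<and> A 2 2 \<and> A 2 3) \<and> \<not>(A 1 2 \<and> A 2 2 \<and> A 3 2) \<and> \<not>(A 3 0 \<and> A 3 1 \<and> A 3 2) \<and> \<not>(A 0 3 \<and> A 1 3 \<and> A 2 3) \<and> \<not>(A 3 0 \<and> A 3 1 \<and> A 3 3) \<and> \<not>(A 0 3 \<and> A 1 3 \<and> A 3 3) \<and> \<not>(A 3 0 \<and> A 3 2 \<and> A 3 3) \<and> \<not>(A 0 3 \<and> A 2 3 \<and> A 3 3) \<and> \<not>(A 3 1 \<and> A 3 2 \<and> A 3 3) \<and> \<not>(A 1 3 \<and> A 2 3 \<and> A 3 3) \<and> \<not>(C 0 0 \<and> C 0 1 \<and> C 0 2) \<and> \<not>(C 0 0 \<and> C 1 0 \<and> C 2 0) \<and> \<not>(C 0 0 \<and> C 0 1 \<and> C 0 3) \<and> \<not>(C 0 0 \<and> C 1 0 \<and> C 3 0) \<and> \<not>(C 0 0 \<and> C 0 2 \<and> C 0 3) \<and> \<not>(C 0 0 \<and> C 2 0 \<and> C 3 0) \<and> \<not>(C 0 1 \<and> C 0 2 \<and> C 0 3) \<and> \<not>(C 1 0 \<and> C 2 0 \<and> C 3 0) \<and> \<not>(C 1 0 \<and> C 1 1 \<and> C 1 2) \<and> \<not>(C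 0 1 \<and> C 1 1 \<and> C 2 1) \<and> \<not>(C 1 0 \<and> C 1 1 \<and> C 1 3) \<and> \<not>(C 0 1 \<and> C 1 1 \<and> C 3 1) \<and> \<not>(C 1 0 \<and> C 1 2 \<and> C 1 3) \<and> \<not>(C 0 1 \<and> C 2 1 \<and> C 3 1) \<and> \<not>(C 1 1 \<and> C 1 2 \<and> C 1 3) \<and> \<not>(C 1 1 \<and> C 2 1 \<and> C 3 1) \<and> \<not>(C 2 0 \<and> C 2 1 \<and> C 2 2) \<and> \<not>(C 0 2 \<and> C 1 2 \<and> C 2 2) \<and> \<not>(C 2 0 \<and> C 2 1 \<and> C 2 3) \<and> \<not>(C 0 2 \<and> C 1 2 \<and> C 3 2) \<and> \<not>(C 2 0 \<and> C 2 2 \<and> C 2 3) \<and> \<not>(C 0 2 \<and> C 2 2 \<and> C 3 2) \<and> \<not>(C 2 1 \<and> C 2 2 \<and> C 2 3) \<and> \<not>(C 1 2 \<and> C 2 2 \<and> C 3 2) \<and> \<not>(C 3 0 \<and> C 3 1 \<and> C 3 2) \<and> \<not>(C 0 3 \<and> C 1 3 \<and> C 2 3) \<and> \<not>(C 3 0 \<and> C 3 1 \<and> C 3 3) \<and> \<not>(C 0 3 \<and> C 1 3 \<and> C 3 3) \<and> \<not>(C 3 0 \<and> C 3 2 \<and> C 3 3) \<and> \<not>(C 0 3 \<and> C 2 3 \<and> C 3 3) \<and> \<not>(C 3 1 \<and> C 3 2 \<and> C 3 3) \<and> \<not>(C 1 3 \<and> C 2 3 \<and> C 3 3)" using assms unfolding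 deg2_def all4 by simp
  show ?thesis unfolding PL_def DL_def der_def avoid_def all4 apply simp using h unfolding One_nat_def by satx
qed

lemma tri_core: assumes "deg1 A" "deg1 C" "deg1 M"
  shows "\<exists>pb\<in>set DL. \<exists>pa\<in>set PL. der pa pb \<and> avoid A pa \<and>
     (\<exists>pc\<in>set PL. der pc pb \<and> avoid C pc \<and> (\<forall>i<4. \<not> M (pa!i) (pc!i)))"
proof -
  have h: "\<not>(A 0 0 \<and> A 0 1) \<and> \<not>(A 0 0 \<and> A 1 0) \<and> \<not>(A 0 0 \<and> A 0 2) \<and> \<not>(A 0 0 \<and> A 2 0) \<and> \<not>(A 0 0 \<and> A 0 3) \<and> \<not>(A 0 0 \<and> A 3 0) \<and> \<not>(A 0 1 \<and> A 0 2) \<and> \<not>(A 1 0 \<and> A 2 0) \<and> \<not>(A 0 1 \<and> A 0 3) \<and> \<not>(A 1 0 \<and> A 3 0) \<and> \<not>(A 0 2 \<and> A 0 3) \<and> \<not>(A 2 0 \<and> A 3 0) \<and> \<not>(A 1 0 \<and> A 1 1) \<and> \<not>(A 0 1 \<and> A 1 1) \<and> \<not>(A 1 0 \<and> A 1 2) \<and> \<not>(A 0 1 \<and> A 2 1) \<and> \<not>(A 1 0 \<and> A 1 3) \<and> \<not>(A 0 1 \<and> A 3 1) \<and> \<not>(A 1 1 \<and> A 1 2) \<and> \<not>(A 1 1 \<and> A 2 1) \<and> \<not>(A 1 1 \<and> A 1 3) \<and> \<not>(A 1 1 \<and> A 3 1) \<and> \<not>(A 1 2 \<and> A 1 3) \<and>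 \<not>(A 2 1 \<and> A 3 1) \<and> \<not>(A 2 0 \<and> A 2 1) \<and> \<not>(A 0 2 \<and> A 1 2) \<and> \<not>(A 2 0 \<and> A 2 2) \<and> \<not>(A 0 2 \<and> A 2 2) \<and> \<not>(A 2 0 \<and> A 2 3) \<and> \<not>(A 0 2 \<and> A 3 2) \<and> \<not>(A 2 1 \<and> A 2 2) \<and> \<not>(A 1 2 \<and> A 2 2) \<and> \<not>(A 2 1 \<and> A 2 3) \<and> \<not>(A 1 2 \<and> A 3 2) \<and> \<not>(A 2 2 \<and> A 2 3) \<and> \<not>(A 2 2 \<and> A 3 2) \<and> \<not>(A 3 0 \<and> A 3 1) \<and> \<not>(A 0 3 \<and> A 1 3) \<and> \<not>(A 3 0 \<and> A 3 2) \<and> \<not>(A 0 3 \<and> A 2 3) \<and> \<not>(A 3 0 \<and> A 3 3) \<and> \<not>(A 0 3 \<and> A 3 3) \<and> \<not>(A 3 1 \<and> A 3 2) \<and> \<not>(A 1 3 \<and> A 2 3) \<and> \<not>(A 3 1 \<and> A 3 3) \<and> \<not>(A 1 3 \<and> A 3 3) \<and> \<not>(A 3 2 \<and> A 3 3) \<and> \<not>(A 2 3 \<and> A 3 3) \<and> \<not>(C 0 0 \<and> C 0 1) \<and> \<not>(C 0 0 \<and> C 1 0) \<and> \<not>(C 0 0 \<and> C 0 2) \<and> \<not>(C 0 0 \<and> C 2 0) \<and> \<not>(C 0 0 \<and> C 0 3) \<and> \<not>(C 0 0 \<and> C 3 0) \<and> \<not>(C 0 1 \<and> C 0 2) \<and>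 \<not>(C 1 0 \<and> C 2 0) \<and> \<not>(C 0 1 \<and> C 0 3) \<and> \<not>(C 1 0 \<and> C 3 0) \<and> \<not>(C 0 2 \<and> C 0 3) \<and> \<not>(C 2 0 \<and> C 3 0) \<and> \<not>(C 1 0 \<and> C 1 1) \<and> \<not>(C 0 1 \<and> C 1 1) \<and> \<not>(C 1 0 \<and> C 1 2) \<and> \<not>(C 0 1 \<and> C 2 1) \<and> \<not>(C 1 0 \<and> C 1 3) \<and> \<not>(C 0 1 \<and> C 3 1) \<and> \<not>(C 1 1 \<and> C 1 2) \<and> \<not>(C 1 1 \<and> C 2 1) \<and> \<not>(C 1 1 \<and> C 1 3) \<and> \<not>(C 1 1 \<and> C 3 1) \<and> \<not>(C 1 2 \<and> C 1 3) \<and> \<not>(C 2 1 \<and> C 3 1) \<and> \<not>(C 2 0 \<and> C 2 1) \<and> \<not>(C 0 2 \<and> C 1 2) \<and> \<not>(C 2 0 \<and> C 2 2) \<and> \<not>(C 0 2 \<and> C 2 2) \<and> \<not>(C 2 0 \<and> C 2 3) \<and> \<not>(C 0 2 \<and> C 3 2) \<and> \<not>(C 2 1 \<and> C 2 2) \<and> \<not>(C 1 2 \<and> C 2 2) \<and> \<not>(C 2 1 \<and> C 2 3) \<and> \<not>(C 1 2 \<and> C 3 2) \<and> \<not>(C 2 2 \<and> C 2 3) \<and> \<not>(C 2 2 \<and> C 3 2) \<and> \<not>(C 3 0 \<and> C 3 1) \<and> \<not>(C 0 3 \<and> C 1 3) \<and> \<not>(C 3 0 \<and> C 3 2) \<and>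 \<not>(C 0 3 \<and> C 2 3) \<and> \<not>(C 3 0 \<and> C 3 3) \<and> \<not>(C 0 3 \<and> C 3 3) \<and> \<not>(C 3 1 \<and> C 3 2) \<and> \<not>(C 1 3 \<and> C 2 3) \<and> \<not>(C 3 1 \<and> C 3 3) \<and> \<not>(C 1 3 \<and> C 3 3) \<and> \<not>(C 3 2 \<and> C 3 3) \<and> \<not>(C 2 3 \<and> C 3 3) \<and> \<not>(M 0 0 \<and> M 0 1) \<and> \<not>(M 0 0 \<and> M 1 0) \<and> \<not>(M 0 0 \<and> M 0 2) \<and> \<not>(M 0 0 \<and> M 2 0) \<and> \<not>(M 0 0 \<and> M 0 3) \<and> \<not>(M 0 0 \<and> M 3 0) \<and> \<not>(M 0 1 \<and> M 0 2) \<and> \<not>(M 1 0 \<and> M 2 0) \<and> \<not>(M 0 1 \<and> M 0 3) \<and> \<not>(M 1 0 \<and> M 3 0) \<and> \<not>(M 0 2 \<and> M 0 3) \<and> \<not>(M 2 0 \<and> M 3 0) \<and> \<not>(M 1 0 \<and> M 1 1) \<and> \<not>(M 0 1 \<and> M 1 1) \<and> \<not>(M 1 0 \<and> M 1 2) \<and> \<not>(M 0 1 \<and> M 2 1) \<and> \<not>(M 1 0 \<and> M 1 3) \<and> \<not>(M 0 1 \<and> M 3 1) \<and> \<not>(M 1 1 \<and> M 1 2) \<and> \<not>(M 1 1 \<and> M 2 1) \<and> \<not>(M 1 1 \<and> M 1 3) \<and> \<not>(M 1 1 \<and> M 3 1) \<and> \<not>(M 1 2 \<and> M 1 3) \<and>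 \<not>(M 2 1 \<and> M 3 1) \<and> \<not>(M 2 0 \<and> M 2 1) \<and> \<not>(M 0 2 \<and> M 1 2) \<and> \<not>(M 2 0 \<and> M 2 2) \<and> \<not>(M 0 2 \<and> M 2 2) \<and> \<not>(M 2 0 \<and> M 2 3) \<and> \<not>(M 0 2 \<and> M 3 2) \<and> \<not>(M 2 1 \<and> M 2 2) \<and> \<not>(M 1 2 \<and> M 2 2) \<and> \<not>(M 2 1 \<and> M 2 3) \<and> \<not>(M 1 2 \<and> M 3 2) \<and> \<not>(M 2 2 \<and> M 2 3) \<and> \<not>(M 2 2 \<and> M 3 2) \<and> \<not>(M 3 0 \<and> M 3 1) \<and> \<not>(M 0 3 \<and> M 1 3) \<and> \<not>(M 3 0 \<and> M 3 2) \<and> \<not>(M 0 3 \<and> M 2 3) \<and> \<not>(M 3 0 \<and> M 3 3) \<and> \<not>(M 0 3 \<and> M 3 3) \<and> \<not>(M 3 1 \<and> M 3 2) \<and> \<not>(M 1 3 \<and> M 2 3) \<and> \<not>(M 3 1 \<and> M 3 3) \<and> \<not>(M 1 3 \<and> M 3 3) \<and> \<not>(M 3 2 \<and> M 3 3) \<and> \<not>(M 2 3 \<and> M 3 3)" using assms unfolding deg1_def all4 by simp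
  show ?thesis unfolding PL_def DL_def der_def avoid_def all4 apply simp using h unfolding One_nat_def by satx
qed

lemma lt4: "{..<4::nat} = {0,1,2,3}" by auto

lemma PL_set: "p \<in> set PL \<Longrightarrow> length p = 4 \<and> set p = {..<4}"
  unfolding PL_def lt4 by (simp only: set_simps insert_iff empty_iff) (elim disjE; simp; blast)

lemma PL_img: "p \<in> set PL \<Longrightarrow> (\<lambda>i. p!i) ` {..<4} = {..<4}"
proof -
  assume "p \<in> set PL"
  then have "length p = 4" "set p = {..<4}" using PL_set by auto
  moreover have "(\<lambda>i. p!i) ` {..<length p} = set p" by (auto simp: set_conv_nth)
  ultimately show ?thesis by simp
qed

lemma PL_bij: "p \<in> set PL \<Longrightarrow> bij_betw (\<lambda>i. p!i) {..<4} {..<4}"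
  using PL_img[of p] by (simp add: bij_betw_def eq_card_imp_inj_on)

lemma DL_PL: "p \<in> set DL \<Longrightarrow> p \<in> set PL" unfolding DL_def PL_def by auto
lemma DL_der: "p \<in> set DL \<Longrightarrow> i < 4 \<Longrightarrow> p!i \<noteq> i"
  unfolding DL_def by (auto simp: less_Suc_eq numeral_eq_Suc)


lemma frel_deg:
  assumes cc: "corr_cover V E L VH EH" and x: "x \<in> V" and \<beta>: "bij_betw \<beta> {..<4} (L x)"
    and NV: "N \<subseteq> V" and fN: "finite N" and adj: "\<forall>w\<in>N. {w,x} \<in> E"
    and s0: "\<forall>w\<in>N. bij_betw (s0 w) {..<4} (L w)" and cN: "card N \<le> d"
  shows "\<forall>i<4. card {j\<in>{..<4::nat}. \<exists>w\<in>N. {s0 w i, \<beta> j} \<in> EH} \<le> d"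
    and "\<forall>j<4. card {i\<in>{..<4::nat}. \<exists>w\<in>N. {s0 w i, \<beta> j} \<in> EH} \<le> d"
proof -
  have bm: "\<forall>j\<in>{..<4}. \<beta> j \<in> L x" and binj: "inj_on \<beta> {..<4}" using \<beta> unfolding bij_betw_def by auto
  show "\<forall>i<4. card {j\<in>{..<4::nat}. \<exists>w\<in>N. {s0 w i, \<beta> j} \<in> EH} \<le> d"
  proof (intro allI impI)
    fix i :: nat assume i: "i < 4"
    have "\<forall>w\<in>N. s0 w i \<in> L w" using s0 i unfolding bij_betw_def by auto
    then have "card {j\<in>{..<4::nat}. \<exists>w\<in>N. {s0 w i, \<beta> j} \<in> EH} \<le> card N"
      using row_bound[OF cc NV fN x adj, of "\<lambda>w. s0 w i" "{..<4}" \<beta>] bm binj by simp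
    then show "card {j\<in>{..<4::nat}. \<exists>w\<in>N. {s0 w i, \<beta> j} \<in> EH} \<le> d" using cN by simp
  qed
  show "\<forall>j<4. card {i\<in>{..<4::nat}. \<exists>w\<in>N. {s0 w i, \<beta> j} \<in> EH} \<le> d"
  proof (intro allI impI)
    fix j :: nat assume j: "j < 4"
    have g: "\<forall>w\<in>N. \<forall>i\<in>{..<4}. s0 w i \<in> L w" and inj: "\<forall>w\<in>N. inj_on (s0 w) {..<4}"
      using s0 unfolding bij_betw_def by auto
    have "card {i\<in>{..<4::nat}. \<exists>w\<in>N. {s0 w i, \<beta> j} \<in> EH} \<le> card N"
      using col_bound[OF cc NV fN x adj g inj, of "\<beta> j"] bm j by simp
    then show "card {i\<in>{..<4::nat}. \<exists>w\<in>N. {s0 w i, \<beta> j} \<in> EH} \<le> d" using cN by simp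
  qed
qed

lemma deg1_of_card:
  assumes r: "\<forall>i<4. card {j\<in>{..<4::nat}. R i j} \<le> 1" and c: "\<forall>j<4. card {i\<in>{..<4::nat}. R i j} \<le> 1"
  shows "deg1 R"
  unfolding deg1_def
proof (intro allI impI conjI notI)
  fix i j1 j2 :: nat assume a: "i < 4" "j1 < 4" "j2 < 4" "j1 < j2"
  {
    assume "R i j1 \<and> R i j2"
    then have "{j1,j2} \<subseteq> {j\<in>{..<4::nat}. R i j}" using a by auto
    then have "card {j1,j2} \<le> card {j\<in>{..<4::nat}. R i j}" by (intro card_mono) auto
    then show False using r a by auto
  }
  {
    assume "R j1 i \<and> R j2 i"
    then have "{j1,j2} \<subseteq> {j\<in>{..<4::nat}. R j i}" using a by auto
    then have "card {j1,j2} \<le> card {j\<in>{..<4::nat}. R j i}" by (intro card_mono) auto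
    then show False using c a by auto
  }
qed

lemma deg2_of_card:
  assumes r: "\<forall>i<4. card {j\<in>{..<4::nat}. R i j} \<le> 2" and c: "\<forall>j<4. card {i\<in>{..<4::nat}. R i j} \<le> 2"
  shows "deg2 R"
  unfolding deg2_def
proof (intro allI impI conjI notI)
  fix i j1 j2 j3 :: nat assume a: "i < 4" "j1 < 4" "j2 < 4" "j3 < 4" "j1 < j2" "j2 < j3"
  have c3: "card {j1,j2,j3} = 3" using a by auto
  {
    assume "R i j1 \<and> R i j2 \<and> R i j3"
    then have "{j1,j2,j3} \<subseteq> {j\<in>{..<4::nat}. R i j}" using a by auto
    then have "card {j1,j2,j3} \<le> card {j\<in>{..<4::nat}. R i j}" by (intro card_mono) auto
    then show False using r a c3 by auto
  }
  {
    assume "R j1 i \<and> R j2 i \<and> R j3 i"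
    then have "{j1,j2,j3} \<subseteq> {j\<in>{..<4::nat}. R j i}" using a by auto
    then have "card {j1,j2,j3} \<le> card {j\<in>{..<4::nat}. R j i}" by (intro card_mono) auto
    then show False using c a c3 by auto
  }
qed

lemma match_deg1:
  assumes cc: "corr_cover V E L VH EH" and xy: "x \<in> V" "y \<in> V" "{x,y} \<in> E"
    and bx: "bij_betw \<beta>x {..<4} (L x)" and hby: "bij_betw \<beta>y {..<4} (L y)"
  shows "deg1 (\<lambda>j j'. {\<beta>x j, \<beta>y j'} \<in> EH)"
  unfolding deg1_def
proof (intro allI impI conjI notI)
  have mx: "\<beta>x j \<in> L x" if "j < 4" for j using bx that unfolding bij_betw_def by auto
  have my: "\<beta>y j \<in> L y" if "j < 4" for j using hby that unfolding bij_betw_def by auto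
  have yx: "{y,x} \<in> E" using xy by (simp add: insert_commute)
  fix i j1 j2 :: nat assume a: "i < 4" "j1 < 4" "j2 < 4" "j1 < j2"
  {
    assume "{\<beta>x i, \<beta>y j1} \<in> EH \<and> {\<beta>x i, \<beta>y j2} \<in> EH"
    then have "\<beta>y j1 = \<beta>y j2" using cc_match[OF cc xy, of "\<beta>x i" "\<beta>y j1" "\<beta>y j2"] mx my a by auto
    then have "j1 = j2" using hby a unfolding bij_betw_def by (auto dest: inj_onD)
    then show False using a by simp
  }
  {
    assume "{\<beta>x j1, \<beta>y i} \<in> EH \<and> {\<beta>x j2, \<beta>y i} \<in> EH"
    then have "{\<beta>y i, \<beta>x j1} \<in> EH" "{\<beta>y i, \<beta>x j2} \<in> EH" by (auto simp: insert_commute)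
    then have "\<beta>x j1 = \<beta>x j2" using cc_match[OF cc xy(2,1) yx, of "\<beta>y i" "\<beta>x j1" "\<beta>x j2"] mx my a by auto
    then have "j1 = j2" using bx a unfolding bij_betw_def by (auto dest: inj_onD)
    then show False using a by simp
  }
qed

lemma nbr_bound:
  assumes g: "graph V E" and x: "x \<in> V" and deg: "degree V E x = 3"
    and A: "A \<subseteq> {u\<in>V. {u,x} \<in> E}" and AN: "A \<inter> N = {}" and N: "N \<subseteq> {u\<in>V. {u,x} \<in> E}"
  shows "card N + card A \<le> 3"
proof -
  have f: "finite {u\<in>V. {u,x} \<in> E}" using graph_fin[OF g] by simp
  have "card (N \<union> A) \<le> card {u\<in>V. {u,x} \<in> E}" using A N f by (intro card_mono) auto
  moreover have "card (N \<union> A) = card N + card A" using A N f AN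
    by (intro card_Un_disjoint) (auto intro: finite_subset)
  ultimately show ?thesis using deg unfolding degree_def by simp
qed


lemma assemble:
  fixes s0 :: "'a \<Rightarrow> nat \<Rightarrow> 'b" and \<sigma>a \<sigma>b \<sigma>c :: "nat \<Rightarrow> 'b"
  assumes g: "graph V E" and cc: "corr_cover V E L VH EH"
    and abc: "a \<noteq> b" "b \<noteq> c" "a \<noteq> c"
    and s0bij: "\<forall>v\<in>V-{a,b,c}. bij_betw (s0 v) {..<4} (L v)"
    and s0e: "\<forall>u\<in>V-{a,b,c}. \<forall>v\<in>V-{a,b,c}. {u,v}\<in>E \<longrightarrow> (\<forall>i<4. {s0 u i, s0 v i} \<notin> EH)"
    and ba: "bij_betw \<sigma>a {..<4} (L a)" and bb: "bij_betw \<sigma>b {..<4} (L b)" and bc: "bij_betw \<sigma>c {..<4} (L c)"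
    and Ca: "\<forall>w\<in>V-{a,b,c}. {w,a}\<in>E \<longrightarrow> (\<forall>i<4. {s0 w i, \<sigma>a i} \<notin> EH)"
    and Cb: "\<forall>w\<in>V-{a,b,c}. {w,b}\<in>E \<longrightarrow> (\<forall>i<4. {s0 w i, \<sigma>b i} \<notin> EH)"
    and Cc: "\<forall>w\<in>V-{a,b,c}. {w,c}\<in>E \<longrightarrow> (\<forall>i<4. {s0 w i, \<sigma>c i} \<notin> EH)"
    and Cab: "\<forall>i<4. {\<sigma>a i, \<sigma>b i} \<notin> EH" and Cbc: "\<forall>i<4. {\<sigma>b i, \<sigma>c i} \<notin> EH"
    and Cac: "{a,c} \<in> E \<longrightarrow> (\<forall>i<4. {\<sigma>a i, \<sigma>c i} \<notin> EH)"
  shows "\<exists>s. spack 4 V E L EH s"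
proof -
  define s where "s v = (if v = a then \<sigma>a else if v = b then \<sigma>b else if v = c then \<sigma>c else s0 v)" for v
  have sa: "s a = \<sigma>a" and sb: "s b = \<sigma>b" and sc: "s c = \<sigma>c" unfolding s_def using abc by auto
  have s0: "s v = s0 v" if "v \<notin> {a,b,c}" for v unfolding s_def using that by auto
  have bij: "\<forall>v\<in>V. bij_betw (s v) {..<4} (L v)"
  proof
    fix v assume "v \<in> V"
    then show "bij_betw (s v) {..<4} (L v)"
      using s0bij ba bb bc sa sb sc s0[of v] by (cases "v \<in> {a,b,c}") auto
  qed
  have outT: "{s0 w i, s x i} \<notin> EH" if "x \<in> {a,b,c}" "w \<in> V-{a,b,c}" "{w,x}\<in>E" "i<4" for x w i
    using that Ca Cb Cc sa sb sc by auto
  have inT: "{s x i, s y i} \<notin> EH" if xT: "x \<in> {a,b,c}" "y \<in> {a,b,c}" "{x,y}\<in>E" "i<4" for x y i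
  proof -
    have "x \<noteq> y" using that graph_noloop[OF g] by auto
    then consider "x=a" "y=b" | "x=b" "y=a" | "x=b" "y=c" | "x=c" "y=b" | "x=a" "y=c" | "x=c" "y=a"
      using xT by auto
    then show ?thesis
    proof cases
      case 1 then show ?thesis using Cab xT sa sb by simp
    next
      case 2 then show ?thesis using Cab xT sa sb by (simp add: insert_commute)
    next
      case 3 then show ?thesis using Cbc xT sb sc by simp
    next
      case 4 then show ?thesis using Cbc xT sb sc by (simp add: insert_commute)
    next
      case 5 then show ?thesis using Cac xT sa sc by simp
    next
      case 6 then show ?thesis using Cac xT sa sc by (simp add: insert_commute)
    qed
  qed
  have "\<forall>u\<in>V. \<forall>v\<in>V. {u,v}\<in>E \<longrightarrow> (\<forall>i<4. {s u i, s v i} \<notin> EH)"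
  proof (intro ballI impI allI)
    fix u v i assume u: "u \<in> V" and v: "v \<in> V" and e: "{u,v}\<in>E" and i: "i < (4::nat)"
    show "{s u i, s v i} \<notin> EH"
    proof (cases "u \<in> {a,b,c}")
      case True
      show ?thesis
      proof (cases "v \<in> {a,b,c}")
        case True then show ?thesis using inT \<open>u \<in> {a,b,c}\<close> e i by simp
      next
        case False
        then have "{s0 v i, s u i} \<notin> EH" using outT[OF True, of v i] v e i by (simp add: insert_commute)
        then show ?thesis using s0[OF False] by (simp add: insert_commute)
      qed
    next
      case False
      show ?thesis
      proof (cases "v \<in> {a,b,c}")
        case True
        then have "{s0 u i, s v i} \<notin> EH" using outT[OF True, of u i] u e i False by simp
        then show ?thesis using s0[OF False] by simp
      next
        case F2: False then show ?thesis using s0e u v e i s0[OF False] s0[OF F2] False by simp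
      qed
    qed
  qed
  then show ?thesis using bij unfolding spack_def by blast
qed


lemma deg1_swap: "deg1 R \<Longrightarrow> deg1 (\<lambda>j i. R i j)"
  unfolding deg1_def by blast

lemma PL_lt: "p \<in> set PL \<Longrightarrow> i < 4 \<Longrightarrow> p!i < 4"
  using PL_img[of p] by auto

lemma get_bij:
  assumes "finite A" "card A = 4"
  shows "\<exists>\<beta>. bij_betw \<beta> {..<4::nat} A"
  using ex_bij_betw_nat_finite[OF assms(1)] assms(2) by (auto simp: atLeast0LessThan)

lemma bij_nth: "bij_betw \<beta> {..<4} A \<Longrightarrow> r \<in> set PL \<Longrightarrow> bij_betw (\<lambda>j. \<beta> (r!j)) {..<4} A"
  using bij_betw_trans[OF PL_bij[of r], of \<beta> A] by (simp add: o_def)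

lemma Pk4_ext:
  assumes g: "graph V E"
    and V: "a \<in> V" "b \<in> V" "c \<in> V" and abc: "a \<noteq> b" "b \<noteq> c" "a \<noteq> c"
    and ab: "{a, b} \<in> E" and bc: "{b, c} \<in> E"
    and da: "degree V E a = 3" and db: "degree V E b = 3" and dc: "degree V E c = 3"
    and P': "Pk 4 (V - {a,b,c}) (induced_edges E (V - {a,b,c}))"
  shows "Pk 4 V E"
  unfolding Pk_def
proof (intro allI impI)
  fix L :: "'a \<Rightarrow> nat set" and VH EH
  assume cov: "kfold_cover 4 V E L VH EH"
  have cc: "corr_cover V E L VH EH" using cov unfolding kfold_cover_def by simp
  have cardL: "card (L v) = 4" if "v \<in> V" for v using cov that unfolding kfold_cover_def by simp
  have finL: "finite (L v)" if "v \<in> V" for v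
    using graph_fin[OF cc_graph[OF cc]] cc_sub[OF cc that] by (rule finite_subset[rotated])
  define V' where "V' = V - {a,b,c}"
  define W where "W = (\<Union>v\<in>V'. L v)"
  have V'V: "V' \<subseteq> V" unfolding V'_def by auto
  have cc': "corr_cover V' (induced_edges E V') L W {e\<in>EH. e \<subseteq> W}"
    unfolding W_def
    by (rule cover_restrict[OF cc V'V]) (auto simp: induced_edges_def)
  have k': "kfold_cover 4 V' (induced_edges E V') L W {e\<in>EH. e \<subseteq> W}"
    using cc' cardL V'V unfolding kfold_cover_def by auto
  obtain s0 where sp0: "spack 4 V' (induced_edges E V') L {e\<in>EH. e \<subseteq> W} s0"
    using P' k' packing_imp_spack unfolding Pk_def V'_def[symmetric] by blast
  have s0bij: "\<forall>v\<in>V'. bij_betw (s0 v) {..<4} (L v)" using sp0 unfolding spack_def by simp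
  have s0e: "\<forall>u\<in>V'. \<forall>v\<in>V'. {u,v}\<in>E \<longrightarrow> (\<forall>i<4. {s0 u i, s0 v i} \<notin> EH)"
  proof (intro ballI impI allI)
    fix u v and i :: nat assume a: "u \<in> V'" "v \<in> V'" "{u,v} \<in> E" "i < 4"
    then have "{u,v} \<in> induced_edges E V'" unfolding induced_edges_def by auto
    then have "{s0 u i, s0 v i} \<notin> {e\<in>EH. e \<subseteq> W}" using sp0 a unfolding spack_def by blast
    moreover have "s0 u i \<in> W" "s0 v i \<in> W" using spack_mem[OF sp0] a unfolding W_def by auto
    ultimately show "{s0 u i, s0 v i} \<notin> EH" by simp
  qed
  define N where "N x = {w\<in>V'. {w,x} \<in> E}" for x
  have NV: "N x \<subseteq> V" for x unfolding N_def using V'V by auto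
  have fN: "finite (N x)" for x using NV graph_fin[OF g] finite_subset by blast
  have Nadj: "\<forall>w\<in>N x. {w,x} \<in> E" for x unfolding N_def by auto
  have Ns0: "\<forall>w\<in>N x. bij_betw (s0 w) {..<4} (L w)" for x using s0bij unfolding N_def by auto
  have Nnb: "N x \<subseteq> {u\<in>V. {u,x} \<in> E}" for x using NV unfolding N_def by auto
  have NT: "{a,b,c} \<inter> N x = {}" for x unfolding N_def V'_def by auto
  have ba': "{b,a} \<in> E" "{c,b} \<in> E" using ab bc by (auto simp: insert_commute)
  have cNb: "card (N b) \<le> 1"
    using nbr_bound[OF g V(2) db, of "{a,c}" "N b"] NT[of b] Nnb[of b] V ab ba' abc by auto
  have cNa: "card (N a) \<le> 2"
    using nbr_bound[OF g V(1) da, of "{b}" "N a"] NT[of a] Nnb[of a] V ba' by auto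
  have cNc: "card (N c) \<le> 2"
    using nbr_bound[OF g V(3) dc, of "{b}" "N c"] NT[of c] Nnb[of c] V bc by auto
  obtain \<beta>0a where b0a: "bij_betw \<beta>0a {..<4::nat} (L a)" using get_bij finL cardL V by blast
  obtain \<beta>0b where b0b: "bij_betw \<beta>0b {..<4::nat} (L b)" using get_bij finL cardL V by blast
  obtain \<beta>0c where b0c: "bij_betw \<beta>0c {..<4::nat} (L c)" using get_bij finL cardL V by blast
  define Fb0 where "Fb0 i j = (\<exists>w\<in>N b. {s0 w i, \<beta>0b j} \<in> EH)" for i j
  have "deg1 Fb0"
    using frel_deg[OF cc V(2) b0b NV fN Nadj Ns0 cNb] unfolding Fb0_def by (intro deg1_of_card) auto
  then obtain rb where rb: "rb \<in> set PL" "\<forall>i<4. \<forall>j<4. Fb0 i (rb!j) \<longrightarrow> i = j"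
    using ext_core[OF deg1_swap[OF \<open>deg1 Fb0\<close>]] by auto
  define \<beta>b where "\<beta>b j = \<beta>0b (rb!j)" for j
  have bb: "bij_betw \<beta>b {..<4} (L b)" unfolding \<beta>b_def using bij_nth[OF b0b rb(1)] .
  have "deg1 (\<lambda>j j'. {\<beta>0a j, \<beta>b j'} \<in> EH)" using match_deg1[OF cc V(1,2) ab b0a bb] .
  then obtain ra where ra: "ra \<in> set PL" "\<forall>i<4. \<forall>j<4. {\<beta>0a (ra!j), \<beta>b i} \<in> EH \<longrightarrow> i = j"
    using ext_core by blast
  define \<beta>a where "\<beta>a j = \<beta>0a (ra!j)" for j
  have ba: "bij_betw \<beta>a {..<4} (L a)" unfolding \<beta>a_def using bij_nth[OF b0a ra(1)] .
  have "deg1 (\<lambda>j j'. {\<beta>0c j, \<beta>b j'} \<in> EH)" using match_deg1[OF cc V(3,2) ba'(2) b0c bb] .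
  then obtain rc where rc: "rc \<in> set PL" "\<forall>i<4. \<forall>j<4. {\<beta>0c (rc!j), \<beta>b i} \<in> EH \<longrightarrow> i = j"
    using ext_core by blast
  define \<beta>c where "\<beta>c j = \<beta>0c (rc!j)" for j
  have bc': "bij_betw \<beta>c {..<4} (L c)" unfolding \<beta>c_def using bij_nth[OF b0c rc(1)] .
  define Fa where "Fa i j = (\<exists>w\<in>N a. {s0 w i, \<beta>a j} \<in> EH)" for i j
  define Fc where "Fc i j = (\<exists>w\<in>N c. {s0 w i, \<beta>c j} \<in> EH)" for i j
  define Mac where "Mac j j' = ({\<beta>a j, \<beta>c j'} \<in> EH)" for j j'
  have fin: "\<exists>s. spack 4 V E L EH s"
    if pa: "pa \<in> set PL" and pb: "pb \<in> set DL" and pc: "pc \<in> set PL"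
      and dab: "der pa pb" and dcb: "der pc pb" and ava: "avoid Fa pa" and avc: "avoid Fc pc"
      and mac: "{a,c} \<in> E \<longrightarrow> (\<forall>i<4. \<not> Mac (pa!i) (pc!i))" for pa pb pc
  proof (rule assemble[OF g cc abc, of s0 "\<lambda>i. \<beta>a (pa!i)" "\<lambda>i. \<beta>b (pb!i)" "\<lambda>i. \<beta>c (pc!i)"])
    show "\<forall>v\<in>V-{a,b,c}. bij_betw (s0 v) {..<4} (L v)" using s0bij unfolding V'_def .
    show "\<forall>u\<in>V-{a,b,c}. \<forall>v\<in>V-{a,b,c}. {u,v}\<in>E \<longrightarrow> (\<forall>i<4. {s0 u i, s0 v i} \<notin> EH)" using s0e unfolding V'_def .
    show "bij_betw (\<lambda>i. \<beta>a (pa!i)) {..<4} (L a)" using bij_nth[OF ba pa] .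
    show "bij_betw (\<lambda>i. \<beta>b (pb!i)) {..<4} (L b)" using bij_nth[OF bb DL_PL[OF pb]] .
    show "bij_betw (\<lambda>i. \<beta>c (pc!i)) {..<4} (L c)" using bij_nth[OF bc' pc] .
    show "\<forall>w\<in>V-{a,b,c}. {w,a}\<in>E \<longrightarrow> (\<forall>i<4. {s0 w i, \<beta>a (pa!i)} \<notin> EH)"
      using ava unfolding avoid_def Fa_def N_def V'_def by auto
    show "\<forall>w\<in>V-{a,b,c}. {w,c}\<in>E \<longrightarrow> (\<forall>i<4. {s0 w i, \<beta>c (pc!i)} \<notin> EH)"
      using avc unfolding avoid_def Fc_def N_def V'_def by auto
    show "\<forall>w\<in>V-{a,b,c}. {w,b}\<in>E \<longrightarrow> (\<forall>i<4. {s0 w i, \<beta>b (pb!i)} \<notin> EH)"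
    proof (intro ballI impI allI notI)
      fix w and i :: nat assume w: "w \<in> V-{a,b,c}" "{w,b} \<in> E" "i < 4" "{s0 w i, \<beta>b (pb!i)} \<in> EH"
      then have "Fb0 i (rb!(pb!i))" unfolding Fb0_def \<beta>b_def N_def V'_def by auto
      then have "i = pb!i" using rb(2) w(3) PL_lt[OF DL_PL[OF pb] w(3)] by blast
      then show False using DL_der[OF pb w(3)] by simp
    qed
    show "\<forall>i<4. {\<beta>a (pa!i), \<beta>b (pb!i)} \<notin> EH"
    proof (intro allI impI notI)
      fix i :: nat assume i: "i < 4" "{\<beta>a (pa!i), \<beta>b (pb!i)} \<in> EH"
      then have "pb!i = pa!i" using ra(2) PL_lt[OF pa i(1)] PL_lt[OF DL_PL[OF pb] i(1)] unfolding \<beta>a_def by blast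
      then show False using dab i unfolding der_def by auto
    qed
    show "\<forall>i<4. {\<beta>b (pb!i), \<beta>c (pc!i)} \<notin> EH"
    proof (intro allI impI notI)
      fix i :: nat assume i: "i < 4" "{\<beta>b (pb!i), \<beta>c (pc!i)} \<in> EH"
      then have "{\<beta>0c (rc!(pc!i)), \<beta>b (pb!i)} \<in> EH" unfolding \<beta>c_def by (simp add: insert_commute)
      then have "pb!i = pc!i" using rc(2) PL_lt[OF pc i(1)] PL_lt[OF DL_PL[OF pb] i(1)] by blast
      then show False using dcb i unfolding der_def by auto
    qed
    show "{a,c} \<in> E \<longrightarrow> (\<forall>i<4. {\<beta>a (pa!i), \<beta>c (pc!i)} \<notin> EH)"
      using mac unfolding Mac_def by auto
  qed
  show "has_packing 4 V L VH EH"
  proof (cases "{a,c} \<in> E")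
    case False
    have "deg2 Fa"
      using frel_deg[OF cc V(1) ba NV fN Nadj Ns0 cNa] unfolding Fa_def by (intro deg2_of_card) auto
    moreover have "deg2 Fc"
      using frel_deg[OF cc V(3) bc' NV fN Nadj Ns0 cNc] unfolding Fc_def by (intro deg2_of_card) auto
    ultimately obtain pb pa pc where "pb \<in> set DL" "pa \<in> set PL" "der pa pb" "avoid Fa pa"
      "pc \<in> set PL" "der pc pb" "avoid Fc pc" using path_core by blast
    then obtain s where "spack 4 V E L EH s" using fin[of pa pb pc] False by blast
    then show ?thesis using spack_imp_packing[OF cc] by blast
  next
    case True
    have ca': "{c,a} \<in> E" using True by (simp add: insert_commute)
    have cNa1: "card (N a) \<le> 1"
      using nbr_bound[OF g V(1) da, of "{b,c}" "N a"] NT[of a] Nnb[of a] V ba' ca' abc by auto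
    have cNc1: "card (N c) \<le> 1"
      using nbr_bound[OF g V(3) dc, of "{a,b}" "N c"] NT[of c] Nnb[of c] V ba' True bc abc by auto
    have "deg1 Fa"
      using frel_deg[OF cc V(1) ba NV fN Nadj Ns0 cNa1] unfolding Fa_def by (intro deg1_of_card) auto
    moreover have "deg1 Fc"
      using frel_deg[OF cc V(3) bc' NV fN Nadj Ns0 cNc1] unfolding Fc_def by (intro deg1_of_card) auto
    moreover have "deg1 Mac" unfolding Mac_def using match_deg1[OF cc V(1,3) True ba bc'] .
    ultimately obtain pb pa pc where "pb \<in> set DL" "pa \<in> set PL" "der pa pb" "avoid Fa pa"
      "pc \<in> set PL" "der pc pb" "avoid Fc pc" "\<forall>i<4. \<not> Mac (pa!i) (pc!i)" using tri_core by blast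
    then obtain s where "spack 4 V E L EH s" using fin[of pa pb pc] by blast
    then show ?thesis using spack_imp_packing[OF cc] by blast
  qed
qed


theorem mainTheorem6:
  fixes V :: "'a set" and E :: "'a set set" and a b c :: 'a
  assumes "graph V E"
    and "a \<in> V" "b \<in> V" "c \<in> V" "a \<noteq> b" "b \<noteq> c" "a \<noteq> c"
    and "{a, b} \<in> E" "{b, c} \<in> E"
    and "degree V E a = 3" "degree V E b = 3" "degree V E c = 3"
    and "chi_c_star (V - {a, b, c}) (induced_edges E (V - {a, b, c})) \<le> 4"
  shows "chi_c_star V E \<le> 4"
proof -
  define V' where "V' = V - {a, b, c}"
  define E' where "E' = induced_edges E V'"
  have gV': "graph V' E'"
    unfolding graph_def
  proof (intro conjI ballI)
    show "finite V'" using graph_fin[OF assms(1)] unfolding V'_def by simp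
  next
    fix e assume e: "e \<in> E'"
    then have "e \<in> E" "e \<subseteq> V'" unfolding E'_def induced_edges_def by auto
    then obtain u v where uv: "e = {u,v}" "u \<noteq> v" using assms(1) unfolding graph_def by meson
    have "u \<in> V'" "v \<in> V'" using \<open>e \<subseteq> V'\<close> uv by auto
    then show "\<exists>u v. e = {u, v} \<and> u \<noteq> v \<and> u \<in> V' \<and> v \<in> V'" using uv
      by (intro exI[where x=u] exI[where x=v]) simp
  qed
  let ?P = "\<lambda>k. 1 \<le> k \<and> Pk k V' E'"
  have "\<exists>k. ?P k" using Pk_ex[OF gV'] .
  then have P0: "?P (Least ?P)" by (rule LeastI_ex)
  have "Least ?P \<le> 4" using assms(13) chi_eq[of V' E'] unfolding V'_def E'_def by simp
  then have "Pk 4 V' E'" using Pk_mono_le[of "Least ?P" V' E' 4] P0 by simp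
  then have "Pk 4 V E" using Pk4_ext[OF assms(1-12)] unfolding V'_def E'_def by simp
  then have "(LEAST k. 1 \<le> k \<and> Pk k V E) \<le> 4" by (intro Least_le) simp
  then show ?thesis using chi_eq[of V E] by simp
qed

end
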